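(* Let $A\in\mathbb R^{n\times n}$ be symmetric, $b\in\mathbb R^n$, $-\infty<\alpha<\beta<+\infty$. Then the two-sided trust region subproblem \[ ({\rm TTRS})\quad \min_x\ \tfrac12x^TAx+b^Tx\quad\text{s.t.}\quad \alpha\le x^Tx\le\beta \] is equivalent to \[ ({\rm CTTRS})\quad \min_{x,t}\ \tfrac12x^T(A-\lambda_{\min}(A)I)x+b^Tx+\tfrac12\lambda_{\min}(A)t\quad\text{s.t.}\quad \alpha\le t\le\beta,\quad \left\|\begin{pmatrix}x\\ \frac{t-1}{2}\end{pmatrix}\right\|\le\frac{t+1}{2}, \] in the sense that $x^*$ globally solves (TTRS) if and only if $(x^*,t^* ):=(x^*,x^{*T}x^* )$ globally solves (CTTRS).
   Context: $\lambda_{\min}(A)$ is the smallest eigenvalue of $A$; $\|\cdot\|$ is the Euclidean norm. *)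

theory Defs
  imports "HOL-Analysis.Analysis"
begin

definition is_eigenvalue :: "real^'n^'n \<Rightarrow> real \<Rightarrow> bool" where
  "is_eigenvalue A l \<longleftrightarrow> (\<exists>v. v \<noteq> 0 \<and> A *v v = l *\<^sub>R v)"

definition lambda_min :: "real^'n^'n \<Rightarrow> real" where
  "lambda_min A = Min {l. is_eigenvalue A l}"

definition ttrs_obj :: "real^'n^'n \<Rightarrow> real^'n \<Rightarrow> real^'n \<Rightarrow> real" where
  "ttrs_obj A b x = 1/2 * (x \<bullet> (A *v x)) + b \<bullet> x"

definition ttrs_feas :: "real \<Rightarrow> real \<Rightarrow> real^'n \<Rightarrow> bool" where
  "ttrs_feas \<alpha> \<beta> x \<longleftrightarrow> \<alpha> \<le> x \<bullet> x \<and> x \<bullet> x \<le> \<beta>"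

definition ttrs_global_sol :: "real^'n^'n \<Rightarrow> real^'n \<Rightarrow> real \<Rightarrow> real \<Rightarrow> real^'n \<Rightarrow> bool" where
  "ttrs_global_sol A b \<alpha> \<beta> x \<longleftrightarrow>
     ttrs_feas \<alpha> \<beta> x \<and> (\<forall>y. ttrs_feas \<alpha> \<beta> y \<longrightarrow> ttrs_obj A b x \<le> ttrs_obj A b y)"

text \<open>(CTTRS). The stacked vector (x, (t-1)/2) is the pair in real^'n \<times> real,
  whose norm is the Euclidean norm sqrt(|x|^2 + ((t-1)/2)^2).\<close>
definition cttrs_obj :: "real^'n^'n \<Rightarrow> real^'n \<Rightarrow> real^'n \<Rightarrow> real \<Rightarrow> real" where
  "cttrs_obj A b x t =
     1/2 * (x \<bullet> ((A - lambda_min A *\<^sub>R mat 1) *v x)) + b \<bullet> x + 1/2 * lambda_min A * t"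

definition cttrs_feas :: "real \<Rightarrow> real \<Rightarrow> real^'n \<Rightarrow> real \<Rightarrow> bool" where
  "cttrs_feas \<alpha> \<beta> x t \<longleftrightarrow> \<alpha> \<le> t \<and> t \<le> \<beta> \<and> norm (x, (t - 1) / 2) \<le> (t + 1) / 2"

definition cttrs_global_sol :: "real^'n^'n \<Rightarrow> real^'n \<Rightarrow> real \<Rightarrow> real \<Rightarrow> real^'n \<Rightarrow> real \<Rightarrow> bool" where
  "cttrs_global_sol A b \<alpha> \<beta> x t \<longleftrightarrow>
     cttrs_feas \<alpha> \<beta> x t \<and>
     (\<forall>y s. cttrs_feas \<alpha> \<beta> y s \<longrightarrow> cttrs_obj A b x t \<le> cttrs_obj A b y s)"

end

theory Submission imports Defs begin
lemma sym_dot: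
  fixes A :: "real^'n^'n"
  assumes "transpose A = A"
  shows "x \<bullet> (A *v y) = y \<bullet> (A *v x)"
proof -
  have "x \<bullet> (A *v y) = (x v* A) \<bullet> y" by (simp add: dot_lmul_matrix)
  also have "x v* A = transpose A *v x" by (simp add: transpose_matrix_vector)
  finally show ?thesis using assms by (simp add: inner_commute)
qed

lemma expand_g:
  fixes A :: "real^'n^'n"
  assumes s: "w \<bullet> (A *v v) = v \<bullet> (A *v w)" and w: "w = A *v v - \<mu> *\<^sub>R v"
  shows "(v + t *\<^sub>R w) \<bullet> (A *v (v + t *\<^sub>R w)) - \<mu> * ((v + t *\<^sub>R w) \<bullet> (v + t *\<^sub>R w))
     = (v \<bullet> (A *v v) - \<mu> * (v \<bullet> v)) + 2 * t * (w \<bullet> w) + t^2 * (w \<bullet> (A *v w) - \<mu> * (w \<bullet> w))"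
proof -
  have Av: "A *v v = w + \<mu> *\<^sub>R v" using w by simp
  have 1: "A *v (v + t *\<^sub>R w) = A *v v + t *\<^sub>R (A *v w)"
    by (simp add: matrix_vector_right_distrib matrix_scaleR_vector_ac scaleR_matrix_vector_assoc)
  have 2: "w \<bullet> (A *v v) = w \<bullet> w + \<mu> * (v \<bullet> w)" by (simp add: Av inner_add_right inner_commute)
  show ?thesis unfolding 1
    by (simp add: inner_add_left inner_add_right s[symmetric] 2 algebra_simps power2_eq_square inner_commute)
qed

lemma eig_exists:
  fixes A :: "real^'n^'n"
  assumes symA: "transpose A = A"
  shows "\<exists>l. is_eigenvalue A l"
proof -
  let ?S = "{x::real^'n. norm x = 1}"
  have "?S = sphere 0 1" by auto
  hence cpt: "compact ?S" by simp
  have ne: "?S \<noteq> {}"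
    proof -
    have "axis (undefined::'n) (1::real) \<in> ?S" by (simp add: norm_axis_1)
    thus ?thesis by blast
  qed
  have cont: "continuous_on ?S (\<lambda>x. x \<bullet> (A *v x))"
    by (intro continuous_intros linear_continuous_on matrix_vector_mul_linear continuous_on_id)
  obtain v where vS: "v \<in> ?S" and vmin: "\<And>y. y \<in> ?S \<Longrightarrow> v \<bullet> (A *v v) \<le> y \<bullet> (A *v y)"
    using continuous_attains_inf[OF cpt ne cont] by blast
  define \<mu> where "\<mu> = v \<bullet> (A *v v)"
  define g where "g x = x \<bullet> (A *v x) - \<mu> * (x \<bullet> x)" for x
  have gpos: "g x \<ge> 0" for x
  proof (cases "x = 0")
    case True then show ?thesis by (simp add: g_def)
  next
    case False
    define u where "u = (1 / norm x) *\<^sub>R x"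
    have "u \<in> ?S" using False by (simp add: u_def)
    hence "\<mu> \<le> u \<bullet> (A *v u)" using vmin \<mu>_def by blast
    also have "u \<bullet> (A *v u) = (x \<bullet> (A *v x)) / (norm x)^2"
    proof -
      have "A *v u = (1 / norm x) *\<^sub>R (A *v x)"
        by (simp add: u_def matrix_scaleR_vector_ac scaleR_matrix_vector_assoc)
      thus ?thesis by (simp add: u_def power2_eq_square)
    qed
    finally have "\<mu> * (norm x)^2 \<le> x \<bullet> (A *v x)"
      using False by (simp add: pos_le_divide_eq)
    thus ?thesis by (simp add: g_def power2_norm_eq_inner)
  qed
  have gv: "g v = 0" using vS by (simp add: g_def \<mu>_def power2_norm_eq_inner[symmetric])
  define w where "w = A *v v - \<mu> *\<^sub>R v"
  have expand: "g (v + t *\<^sub>R w) = g v + 2 * t * (w \<bullet> w) + t^2 * g w" for t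
  proof -
    have s: "w \<bullet> (A *v v) = v \<bullet> (A *v w)" using sym_dot[OF symA] by simp
    show ?thesis
      unfolding g_def by (rule expand_g[OF s w_def])
  qed
  have "w = 0"
  proof (rule ccontr)
    assume "w \<noteq> 0"
    hence wp: "w \<bullet> w > 0" by simp
    define s where "s = (w \<bullet> w) / (g w + 1)"
    have sp: "s > 0" using wp gpos[of w] by (simp add: s_def)
    have "0 \<le> g (v + (-s) *\<^sub>R w)" by (rule gpos)
    hence "0 \<le> -2 * s * (w \<bullet> w) + s^2 * g w" using expand[of "-s"] gv by simp
    hence "0 \<le> s * (-2 * (w \<bullet> w) + s * g w)" by (simp add: algebra_simps power2_eq_square)
    hence h: "0 \<le> -2 * (w \<bullet> w) + s * g w" using sp by (simp add: zero_le_mult_iff)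
    have "s * g w < w \<bullet> w" using wp gpos[of w] unfolding s_def
      by (simp add: field_simps)
    thus False using h wp by linarith
  qed
  hence "A *v v = \<mu> *\<^sub>R v" by (simp add: w_def)
  moreover have "v \<noteq> 0" using vS by auto
  ultimately show ?thesis unfolding is_eigenvalue_def by blast
qed

lemma eig_finite:
  fixes A :: "real^'n^'n"
  assumes symA: "transpose A = A"
  shows "finite {l. is_eigenvalue A l}"
proof -
  let ?E = "{l. is_eigenvalue A l}"
  define f where "f l = (SOME v. v \<noteq> 0 \<and> A *v v = l *\<^sub>R v)" for l
  have f: "f l \<noteq> 0 \<and> A *v f l = l *\<^sub>R f l" if "l \<in> ?E" for l
    using that unfolding f_def is_eigenvalue_def by (metis (mono_tags, lifting) someI_ex mem_Collect_eq)
  have inj: "inj_on f ?E"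
  proof (rule inj_onI)
    fix l m assume l: "l \<in> ?E" and m: "m \<in> ?E" and e: "f l = f m"
    have "l *\<^sub>R f l = m *\<^sub>R f l" using f[OF l] f[OF m] e by metis
    thus "l = m" using f[OF l] by simp
  qed
  have "pairwise orthogonal (f ` ?E)"
  proof (rule pairwiseI)
    fix x y assume x: "x \<in> f ` ?E" and y: "y \<in> f ` ?E" and xy: "x \<noteq> y"
    obtain l where l: "l \<in> ?E" and xl: "x = f l" using x by blast
    obtain m where m: "m \<in> ?E" and ym: "y = f m" using y by blast
    have ne: "f l \<noteq> f m" using xy xl ym by simp
    have lm: "l \<noteq> m" using ne by auto
    have "l * (f l \<bullet> f m) = f m \<bullet> (A *v f l)" using f[OF l] by (simp add: inner_commute)
    also have "\<dots> = f l \<bullet> (A *v f m)" by (rule sym_dot[OF symA])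
    also have "\<dots> = m * (f l \<bullet> f m)" using f[OF m] by simp
    finally have "(l - m) * (f l \<bullet> f m) = 0" by (simp add: algebra_simps)
    thus "orthogonal x y" using lm xl ym by (simp add: orthogonal_def)
  qed
  hence "finite (f ` ?E)" by (rule pairwise_orthogonal_imp_finite)
  thus ?thesis using inj finite_imageD by blast
qed

lemma lambda_min_eig:
  fixes A :: "real^'n^'n"
  assumes symA: "transpose A = A"
  shows "is_eigenvalue A (lambda_min A)"
proof -
  have "lambda_min A \<in> {l. is_eigenvalue A l}"
    unfolding lambda_min_def using eig_finite[OF symA] eig_exists[OF symA]
    by (intro Min_in) auto
  thus ?thesis by simp
qed

lemma feas_iff:
  "cttrs_feas \<alpha> \<beta> (x::real^'n) t \<longleftrightarrow> \<alpha> \<le> t \<and> t \<le> \<beta> \<and> x \<bullet> x \<le> t"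
proof -
  have "norm (x, (t - 1) / 2) \<le> (t + 1) / 2 \<longleftrightarrow> x \<bullet> x \<le> t"
  proof
    assume h: "norm (x, (t - 1) / 2) \<le> (t + 1) / 2"
    have "0 \<le> (t+1)/2" using h norm_ge_zero order_trans by blast
    hence "(norm (x, (t - 1) / 2))^2 \<le> ((t + 1) / 2)^2" using h by (simp add: power_mono)
    hence "(norm x)^2 + ((t-1)/2)^2 \<le> ((t + 1) / 2)^2" by (simp add: norm_Pair power_divide power2_abs)
    hence "(norm x)^2 \<le> t" by (simp add: power2_eq_square field_simps)
    thus "x \<bullet> x \<le> t" by (simp add: power2_norm_eq_inner)
  next
    assume h: "x \<bullet> x \<le> t"
    have t0: "0 \<le> t" using h by (metis inner_ge_zero order_trans)
    have "(norm x)^2 \<le> t" using h by (simp add: power2_norm_eq_inner)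
    hence "(norm x)^2 + ((t-1)/2)^2 \<le> ((t + 1) / 2)^2"
      by (simp add: power2_eq_square field_simps)
    hence "sqrt ((norm x)^2 + ((t-1)/2)^2) \<le> sqrt (((t + 1) / 2)^2)" by (rule real_sqrt_le_mono)
    hence "sqrt ((norm x)^2 + ((t-1)/2)^2) \<le> (t + 1) / 2" using t0 by simp
    moreover have "norm (x, (t - 1) / 2) = sqrt ((norm x)^2 + ((t-1)/2)^2)" by (simp add: norm_Pair power_divide power2_abs)
    ultimately show "norm (x, (t - 1) / 2) \<le> (t + 1) / 2" by simp
  qed
  thus ?thesis by (simp add: cttrs_feas_def)
qed

lemma obj_eq:
  "cttrs_obj A b x t = ttrs_obj A b x + lambda_min A / 2 * (t - x \<bullet> x)"
  apply (simp add: cttrs_obj_def ttrs_obj_def matrix_vector_mult_diff_rdistrib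
      scaleR_matrix_vector_assoc[symmetric] matrix_vector_mul_lid inner_diff_right algebra_simps)
  by (simp add: field_simps)

lemma move_to_sphere:
  fixes A :: "real^'n^'n"
  assumes symA: "transpose A = A" and ys: "y \<bullet> y \<le> s"
  shows "\<exists>z. z \<bullet> z = s \<and> ttrs_obj A b z \<le> cttrs_obj A b y s"
proof -
  let ?l = "lambda_min A"
  obtain v where v0: "v \<noteq> 0" and Av: "A *v v = ?l *\<^sub>R v"
    using lambda_min_eig[OF symA] unfolding is_eigenvalue_def by blast
  define u0 where "u0 = (1 / norm v) *\<^sub>R v"
  have u0n: "u0 \<bullet> u0 = 1" using v0 by (simp add: u0_def dot_square_norm power2_eq_square)
  have "A *v u0 = (1 / norm v) *\<^sub>R (A *v v)"
    by (simp add: u0_def matrix_scaleR_vector_ac scaleR_matrix_vector_assoc)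
  hence Au0: "A *v u0 = ?l *\<^sub>R u0" by (simp add: Av u0_def)
  define u where "u = (if b \<bullet> u0 \<le> 0 then u0 else - u0)"
  have un: "u \<bullet> u = 1" using u0n by (simp add: u_def)
  have Au: "A *v u = ?l *\<^sub>R u" using Au0 by (simp add: u_def vec.neg)
  have bu: "b \<bullet> u \<le> 0" by (simp add: u_def)
  define c where "c = y \<bullet> u"
  define r where "r = sqrt (c^2 + (s - y \<bullet> y))"
  define \<tau> where "\<tau> = r - c"
  have r2: "r^2 = c^2 + (s - y \<bullet> y)" using ys by (simp add: r_def)
  have rc: "\<bar>c\<bar> \<le> r" unfolding r_def using ys
    by (metis add_le_same_cancel1 diff_ge_0_iff_ge real_sqrt_abs real_sqrt_le_mono le_add_same_cancel1)
  have tau0: "\<tau> \<ge> 0" using rc by (simp add: \<tau>_def)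
  define z where "z = y + \<tau> *\<^sub>R u"
  have zz: "z \<bullet> z = y \<bullet> y + 2 * \<tau> * c + \<tau>^2"
    by (simp add: z_def inner_add_left inner_add_right c_def un inner_commute power2_eq_square algebra_simps)
  have "2 * \<tau> * c + \<tau>^2 = r^2 - c^2" by (simp add: \<tau>_def power2_eq_square algebra_simps)
  hence zs: "z \<bullet> z = s" using zz r2 by simp
  have uAy: "u \<bullet> (A *v y) = ?l * c" using sym_dot[OF symA, of u y] Au by (simp add: c_def)
  have Atu: "A *v (\<tau> *\<^sub>R u) = \<tau> *\<^sub>R (A *v u)"
    by (simp add: matrix_scaleR_vector_ac scaleR_matrix_vector_assoc)
  have Az: "A *v z = A *v y + \<tau> *\<^sub>R (?l *\<^sub>R u)"
    by (simp only: z_def matrix_vector_right_distrib Atu Au)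
  have zAz: "z \<bullet> (A *v z) = y \<bullet> (A *v y) + 2 * \<tau> * ?l * c + \<tau>^2 * ?l"
    unfolding Az by (simp add: z_def inner_add_left inner_add_right uAy un c_def inner_commute power2_eq_square algebra_simps)
  have "ttrs_obj A b z = cttrs_obj A b y s + \<tau> * (b \<bullet> u)"
  proof -
    have s_eq: "s = y \<bullet> y + 2 * \<tau> * c + \<tau>^2" using zz zs by simp
    show ?thesis unfolding obj_eq ttrs_obj_def zAz s_eq
      by (simp add: z_def inner_add_right algebra_simps)
  qed
  moreover have "\<tau> * (b \<bullet> u) \<le> 0" using tau0 bu by (simp add: mult_nonneg_nonpos)
  ultimately show ?thesis using zs by (intro exI[of _ z]) auto
qed

theorem corollary6:
  fixes A :: "real^'n^'n" and b :: "real^'n" and \<alpha> \<beta> :: real and xs :: "real^'n"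
  assumes "transpose A = A"
    and "\<alpha> < \<beta>"
  shows "ttrs_global_sol A b \<alpha> \<beta> xs \<longleftrightarrow> cttrs_global_sol A b \<alpha> \<beta> xs (xs \<bullet> xs)"
proof
  assume h: "ttrs_global_sol A b \<alpha> \<beta> xs"
  show "cttrs_global_sol A b \<alpha> \<beta> xs (xs \<bullet> xs)"
    unfolding cttrs_global_sol_def
  proof (intro conjI allI impI)
    show "cttrs_feas \<alpha> \<beta> xs (xs \<bullet> xs)" using h by (simp add: feas_iff ttrs_global_sol_def ttrs_feas_def)
  next
    fix y :: "real^'n" and s :: real assume "cttrs_feas \<alpha> \<beta> y s"
    hence f: "\<alpha> \<le> s" "s \<le> \<beta>" "y \<bullet> y \<le> s" by (simp_all add: feas_iff)
    obtain z where zs: "z \<bullet> z = s" and le: "ttrs_obj A b z \<le> cttrs_obj A b y s"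
      using move_to_sphere[OF assms(1) f(3)] by blast
    have "ttrs_feas \<alpha> \<beta> z" using zs f by (simp add: ttrs_feas_def)
    hence "ttrs_obj A b xs \<le> ttrs_obj A b z" using h by (simp add: ttrs_global_sol_def)
    thus "cttrs_obj A b xs (xs \<bullet> xs) \<le> cttrs_obj A b y s" using le by (simp add: obj_eq)
  qed
next
  assume h: "cttrs_global_sol A b \<alpha> \<beta> xs (xs \<bullet> xs)"
  show "ttrs_global_sol A b \<alpha> \<beta> xs"
    unfolding ttrs_global_sol_def
  proof (intro conjI allI impI)
    show "ttrs_feas \<alpha> \<beta> xs" using h by (simp add: feas_iff cttrs_global_sol_def ttrs_feas_def)
  next
    fix y :: "real^'n" assume "ttrs_feas \<alpha> \<beta> y"
    hence "cttrs_feas \<alpha> \<beta> y (y \<bullet> y)" by (simp add: feas_iff ttrs_feas_def)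
    hence "cttrs_obj A b xs (xs \<bullet> xs) \<le> cttrs_obj A b y (y \<bullet> y)" using h by (simp add: cttrs_global_sol_def)
    thus "ttrs_obj A b xs \<le> ttrs_obj A b y" by (simp add: obj_eq)
  qed
qed
end
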